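(* Let $(t^\ell)_{\ell\in\mathbb{N}}$ be a sequence of positive numbers with $t^\ell\to0$. Suppose that for each $\ell$, $x^\ell\in M_{t^\ell}$ is a Karush-Kuhn-Tucker point of $\mathrm{MPOC}_{t^\ell}$, and that $x^\ell\to\bar x$. If $\bar x\in M$ and LICQ holds at $\bar x$, then $\bar x$ is a T-stationary point of MPOC.
   Context: MPOC: minimize $f(x)$ subject to $x\in M=\{x\in\mathbb{R}^n \mid h_i(x)=0,\ i\in I;\ g_j(x)\ge 0,\ j\in J;\ F_{1,m}(x)F_{2,m}(x)=0,\ F_{2,m}(x)\ge 0,\ m=1,\dots,k\}$, all functions $C^2$, $I,J$ finite. For $t>0$, the Scholtes-type regularization $\mathrm{MPOC}_t$ is the nonlinear program: minimize $f(x)$ subject to $x\in M_t=\{x\mid h_i(x)=0\ (i\in I),\ g_j(x)\ge0\ (j\in J),\ -t\le F_{1,m}(x)F_{2,m}(x)\le t,\ F_{2,m}(x)\ge0\ (m=1,\dots,k)\}$; a KKT point is a feasible point satisfying the standard Karush-Kuhn-Tucker conditions for this smooth program (gradient of $f$ equals a combination of constraint gradients with nonnegative multipliers for inequality constraints and complementary slackness). Index sets at $\bar x\in M$: $J_0(\bar x)=\{j\mid g_j(\bar x)=0\}$, $a_{00}(\bar x)=\{m\mid F_{1,m}(\bar x)=0=F_{2,m}(\bar x)\}$, $a_{01}(\bar x)=\{m\mid F_{1,m}(\bar x)=0,F_{2,m}(\bar x)>0\}$, $a_{10}(\bar x)=\{m\mid F_{1,m}(\bar x)\ne0,F_{2,m}(\bar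 x)=0\}$. LICQ at $\bar x$: $Dh_i(\bar x)$ ($i\in I$), $Dg_j(\bar x)$ ($j\in J_0(\bar x)$), $DF_{1,m}(\bar x)$ ($m\in a_{01}\cup a_{00}$), $DF_{2,m}(\bar x)$ ($m\in a_{10}\cup a_{00}$) linearly independent. T-stationary point: $\bar x\in M$ with multipliers $\bar\lambda_i,\bar\mu_j$ ($j\in J_0(\bar x)$), $\bar\sigma_{1,m}$ ($m\in a_{01}$), $\bar\sigma_{2,m}$ ($m\in a_{10}$), $\bar\varrho_{1,m},\bar\varrho_{2,m}$ ($m\in a_{00}$) such that $Df(\bar x)=\sum_{I}\bar\lambda_iDh_i+\sum_{J_0}\bar\mu_jDg_j+\sum_{a_{01}}\bar\sigma_{1,m}DF_{1,m}+\sum_{a_{10}}\bar\sigma_{2,m}DF_{2,m}+\sum_{a_{00}}(\bar\varrho_{1,m}DF_{1,m}+\bar\varrho_{2,m}DF_{2,m})$ (at $\bar x$), $\bar\mu_j\ge0$, and $\bar\varrho_{1,m}=0$ or $\bar\varrho_{2,m}\le0$ for each $m\in a_{00}(\bar x)$. *)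

theory Defs
  imports "HOL-Analysis.Analysis"
begin

definition grad :: "('a::euclidean_space \<Rightarrow> real) \<Rightarrow> 'a \<Rightarrow> 'a" where
  "grad \<phi> x = (\<Sum>i\<in>Basis. frechet_derivative \<phi> (at x) i *\<^sub>R i)"

definition C2 :: "('a::euclidean_space \<Rightarrow> real) \<Rightarrow> bool" where
  "C2 \<phi> \<longleftrightarrow> (\<forall>x. \<phi> differentiable (at x)) \<and> (\<forall>x. grad \<phi> differentiable (at x)) \<and>
     (\<forall>i\<in>Basis. \<forall>j\<in>Basis. continuous_on UNIV (\<lambda>x. frechet_derivative (grad \<phi>) (at x) i \<bullet> j))"

definition MPOC_feasible ::
  "(nat \<Rightarrow> 'a \<Rightarrow> real) \<Rightarrow> nat set \<Rightarrow> (nat \<Rightarrow> 'a \<Rightarrow> real) \<Rightarrow> nat set \<Rightarrow>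
   (nat \<Rightarrow> 'a \<Rightarrow> real) \<Rightarrow> (nat \<Rightarrow> 'a \<Rightarrow> real) \<Rightarrow> nat \<Rightarrow> 'a set" where
  "MPOC_feasible h I g J F1 F2 k = {x. (\<forall>i\<in>I. h i x = 0) \<and> (\<forall>j\<in>J. g j x \<ge> 0) \<and>
      (\<forall>m<k. F1 m x * F2 m x = 0 \<and> F2 m x \<ge> 0)}"

definition MPOC_reg_feasible ::
  "(nat \<Rightarrow> 'a \<Rightarrow> real) \<Rightarrow> nat set \<Rightarrow> (nat \<Rightarrow> 'a \<Rightarrow> real) \<Rightarrow> nat set \<Rightarrow>
   (nat \<Rightarrow> 'a \<Rightarrow> real) \<Rightarrow> (nat \<Rightarrow> 'a \<Rightarrow> real) \<Rightarrow> nat \<Rightarrow> real \<Rightarrow> 'a set" where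
  "MPOC_reg_feasible h I g J F1 F2 k t = {x. (\<forall>i\<in>I. h i x = 0) \<and> (\<forall>j\<in>J. g j x \<ge> 0) \<and>
      (\<forall>m<k. - t \<le> F1 m x * F2 m x \<and> F1 m x * F2 m x \<le> t \<and> F2 m x \<ge> 0)}"

text \<open>The constraint -t <= F1 F2 <= t is the pair of
  inequality constraints F1 F2 + t >= 0 (multiplier alpha) and t - F1 F2 >= 0 (multiplier beta);
  F2 >= 0 has multiplier nu.\<close>
definition KKT_reg ::
  "('a::euclidean_space \<Rightarrow> real) \<Rightarrow> (nat \<Rightarrow> 'a \<Rightarrow> real) \<Rightarrow> nat set \<Rightarrow> (nat \<Rightarrow> 'a \<Rightarrow> real) \<Rightarrow> nat set \<Rightarrow>
   (nat \<Rightarrow> 'a \<Rightarrow> real) \<Rightarrow> (nat \<Rightarrow> 'a \<Rightarrow> real) \<Rightarrow> nat \<Rightarrow> real \<Rightarrow> 'a \<Rightarrow> bool" where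
  "KKT_reg f h I g J F1 F2 k t x \<longleftrightarrow> x \<in> MPOC_reg_feasible h I g J F1 F2 k t \<and>
     (\<exists>(lam::nat \<Rightarrow> real) (mu::nat \<Rightarrow> real) (alpha::nat \<Rightarrow> real) (beta::nat \<Rightarrow> real) (nu::nat \<Rightarrow> real).
        grad f x = (\<Sum>i\<in>I. lam i *\<^sub>R grad (h i) x) + (\<Sum>j\<in>J. mu j *\<^sub>R grad (g j) x)
          + (\<Sum>m<k. alpha m *\<^sub>R grad (\<lambda>y. F1 m y * F2 m y + t) x)
          + (\<Sum>m<k. beta m *\<^sub>R grad (\<lambda>y. t - F1 m y * F2 m y) x)
          + (\<Sum>m<k. nu m *\<^sub>R grad (F2 m) x)
        \<and> (\<forall>j\<in>J. mu j \<ge> 0 \<and> mu j * g j x = 0)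
        \<and> (\<forall>m<k. alpha m \<ge> 0 \<and> alpha m * (F1 m x * F2 m x + t) = 0)
        \<and> (\<forall>m<k. beta m \<ge> 0 \<and> beta m * (t - F1 m x * F2 m x) = 0)
        \<and> (\<forall>m<k. nu m \<ge> 0 \<and> nu m * F2 m x = 0))"

definition J0 :: "(nat \<Rightarrow> 'a \<Rightarrow> real) \<Rightarrow> nat set \<Rightarrow> 'a \<Rightarrow> nat set" where
  "J0 g J x = {j\<in>J. g j x = 0}"
definition a00 :: "(nat \<Rightarrow> 'a \<Rightarrow> real) \<Rightarrow> (nat \<Rightarrow> 'a \<Rightarrow> real) \<Rightarrow> nat \<Rightarrow> 'a \<Rightarrow> nat set" where
  "a00 F1 F2 k x = {m. m < k \<and> F1 m x = 0 \<and> F2 m x = 0}"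
definition a01 :: "(nat \<Rightarrow> 'a \<Rightarrow> real) \<Rightarrow> (nat \<Rightarrow> 'a \<Rightarrow> real) \<Rightarrow> nat \<Rightarrow> 'a \<Rightarrow> nat set" where
  "a01 F1 F2 k x = {m. m < k \<and> F1 m x = 0 \<and> F2 m x > 0}"
definition a10 :: "(nat \<Rightarrow> 'a \<Rightarrow> real) \<Rightarrow> (nat \<Rightarrow> 'a \<Rightarrow> real) \<Rightarrow> nat \<Rightarrow> 'a \<Rightarrow> nat set" where
  "a10 F1 F2 k x = {m. m < k \<and> F1 m x \<noteq> 0 \<and> F2 m x = 0}"

definition LICQ ::
  "(nat \<Rightarrow> 'a::euclidean_space \<Rightarrow> real) \<Rightarrow> nat set \<Rightarrow> (nat \<Rightarrow> 'a \<Rightarrow> real) \<Rightarrow> nat set \<Rightarrow>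
   (nat \<Rightarrow> 'a \<Rightarrow> real) \<Rightarrow> (nat \<Rightarrow> 'a \<Rightarrow> real) \<Rightarrow> nat \<Rightarrow> 'a \<Rightarrow> bool" where
  "LICQ h I g J F1 F2 k x \<longleftrightarrow>
     (\<forall>(c::nat \<Rightarrow> real) (d::nat \<Rightarrow> real) (e1::nat \<Rightarrow> real) (e2::nat \<Rightarrow> real).
        (\<Sum>i\<in>I. c i *\<^sub>R grad (h i) x) + (\<Sum>j\<in>J0 g J x. d j *\<^sub>R grad (g j) x)
        + (\<Sum>m\<in>a01 F1 F2 k x \<union> a00 F1 F2 k x. e1 m *\<^sub>R grad (F1 m) x)
        + (\<Sum>m\<in>a10 F1 F2 k x \<union> a00 F1 F2 k x. e2 m *\<^sub>R grad (F2 m) x) = 0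
        \<longrightarrow> (\<forall>i\<in>I. c i = 0) \<and> (\<forall>j\<in>J0 g J x. d j = 0)
            \<and> (\<forall>m\<in>a01 F1 F2 k x \<union> a00 F1 F2 k x. e1 m = 0)
            \<and> (\<forall>m\<in>a10 F1 F2 k x \<union> a00 F1 F2 k x. e2 m = 0))"

definition T_stationary ::
  "('a::euclidean_space \<Rightarrow> real) \<Rightarrow> (nat \<Rightarrow> 'a \<Rightarrow> real) \<Rightarrow> nat set \<Rightarrow> (nat \<Rightarrow> 'a \<Rightarrow> real) \<Rightarrow> nat set \<Rightarrow>
   (nat \<Rightarrow> 'a \<Rightarrow> real) \<Rightarrow> (nat \<Rightarrow> 'a \<Rightarrow> real) \<Rightarrow> nat \<Rightarrow> 'a \<Rightarrow> bool" where
  "T_stationary f h I g J F1 F2 k x \<longleftrightarrow> x \<in> MPOC_feasible h I g J F1 F2 k \<and>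
     (\<exists>(lam::nat \<Rightarrow> real) (mu::nat \<Rightarrow> real) (s1::nat \<Rightarrow> real) (s2::nat \<Rightarrow> real)
        (r1::nat \<Rightarrow> real) (r2::nat \<Rightarrow> real).
        grad f x = (\<Sum>i\<in>I. lam i *\<^sub>R grad (h i) x) + (\<Sum>j\<in>J0 g J x. mu j *\<^sub>R grad (g j) x)
          + (\<Sum>m\<in>a01 F1 F2 k x. s1 m *\<^sub>R grad (F1 m) x)
          + (\<Sum>m\<in>a10 F1 F2 k x. s2 m *\<^sub>R grad (F2 m) x)
          + (\<Sum>m\<in>a00 F1 F2 k x. r1 m *\<^sub>R grad (F1 m) x + r2 m *\<^sub>R grad (F2 m) x)
        \<and> (\<forall>j\<in>J0 g J x. mu j \<ge> 0)
        \<and> (\<forall>m\<in>a00 F1 F2 k x. r1 m = 0 \<or> r2 m \<le> 0))"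

end

theory Submission
  imports Defs
begin

lemma span_image_sum:
  fixes f :: "'p \<Rightarrow> 'a::real_vector"
  assumes "finite S" "x \<in> span (f ` S)"
  shows "\<exists>c. x = (\<Sum>s\<in>S. c s *\<^sub>R f s)"
  using assms(2)
proof (induction rule: span_induct)
  case base
  show ?case unfolding subspace_def
  proof (intro conjI ballI allI)
    show "0 \<in> {x. \<exists>c. x = (\<Sum>s\<in>S. c s *\<^sub>R f s)}" by (auto intro!: exI[of _ "\<lambda>s. 0"])
  next
    fix x y assume "x \<in> {x. \<exists>c. x = (\<Sum>s\<in>S. c s *\<^sub>R f s)}" "y \<in> {x. \<exists>c. x = (\<Sum>s\<in>S. c s *\<^sub>R f s)}"
    then obtain c d where "x = (\<Sum>s\<in>S. c s *\<^sub>R f s)" "y = (\<Sum>s\<in>S. d s *\<^sub>R f s)" by auto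
    then show "x + y \<in> {x. \<exists>c. x = (\<Sum>s\<in>S. c s *\<^sub>R f s)}"
      by (auto intro!: exI[of _ "\<lambda>s. c s + d s"] simp: scaleR_add_left sum.distrib)
  next
    fix a x assume "x \<in> {x. \<exists>c. x = (\<Sum>s\<in>S. c s *\<^sub>R f s)}"
    then obtain c where "x = (\<Sum>s\<in>S. c s *\<^sub>R f s)" by auto
    then show "a *\<^sub>R x \<in> {x. \<exists>c. x = (\<Sum>s\<in>S. c s *\<^sub>R f s)}"
      by (auto intro!: exI[of _ "\<lambda>s. a * c s"] simp: scaleR_sum_right)
  qed
next
  case (step x)
  then obtain s0 where s0: "s0 \<in> S" "x = f s0" by auto
  have "(\<Sum>s\<in>S. (if s = s0 then 1 else 0) *\<^sub>R f s) = (\<Sum>s\<in>S. if s = s0 then f s else 0)"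
    by (rule sum.cong) auto
  also have "\<dots> = f s0" using s0 assms(1) by simp
  finally show ?case using s0 by metis
qed

lemma dual_vec:
  fixes v :: "'p \<Rightarrow> 'a::euclidean_space"
  assumes P: "finite P" and ind: "\<And>c. (\<Sum>p\<in>P. c p *\<^sub>R v p) = 0 \<Longrightarrow> \<forall>p\<in>P. c p = 0"
    and p: "p \<in> P"
  shows "\<exists>w. \<forall>q\<in>P. v q \<bullet> w = (if q = p then 1 else 0)"
proof -
  obtain y z where y: "y \<in> span (v ` (P - {p}))" and z: "\<And>w. w \<in> span (v ` (P - {p})) \<Longrightarrow> orthogonal z w"
    and yz: "v p = y + z"
    using orthogonal_subspace_decomp_exists[of "v ` (P - {p})" "v p"] by metis
  have "z \<noteq> 0"
  proof
    assume "z = 0"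
    then have "v p \<in> span (v ` (P - {p}))" using y yz by simp
    then obtain d where d: "v p = (\<Sum>s\<in>P - {p}. d s *\<^sub>R v s)"
      using span_image_sum[of "P - {p}"] P by blast
    define c where "c = (\<lambda>s. if s = p then -1 else d s)"
    have "(\<Sum>s\<in>P. c s *\<^sub>R v s) = c p *\<^sub>R v p + (\<Sum>s\<in>P - {p}. c s *\<^sub>R v s)"
      using P p by (simp add: sum.remove)
    also have "(\<Sum>s\<in>P - {p}. c s *\<^sub>R v s) = (\<Sum>s\<in>P - {p}. d s *\<^sub>R v s)"
      by (rule sum.cong) (auto simp: c_def)
    finally have "(\<Sum>s\<in>P. c s *\<^sub>R v s) = 0" using d by (simp add: c_def)
    then have "c p = 0" using ind p by blast
    then show False by (simp add: c_def)
  qed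
  then have zz: "z \<bullet> z \<noteq> 0" by simp
  have yz0: "y \<bullet> z = 0" using z[OF y] by (simp add: orthogonal_def inner_commute)
  show ?thesis
  proof (intro exI ballI)
    fix q assume q: "q \<in> P"
    show "v q \<bullet> (z /\<^sub>R (z \<bullet> z)) = (if q = p then 1 else 0)"
    proof (cases "q = p")
      case True
      then show ?thesis using zz yz0 by (simp add: yz inner_add_left)
    next
      case False
      then have "v q \<in> span (v ` (P - {p}))" using q by (auto intro: span_base)
      then have "v q \<bullet> z = 0" using z unfolding orthogonal_def by (metis inner_commute)
      then show ?thesis using False by simp
    qed
  qed
qed

lemma dual_family:
  fixes v :: "'p \<Rightarrow> 'a::euclidean_space"
  assumes P: "finite P" and ind: "\<And>c. (\<Sum>p\<in>P. c p *\<^sub>R v p) = 0 \<Longrightarrow> \<forall>p\<in>P. c p = 0"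
  shows "\<exists>W. \<forall>p\<in>P. \<forall>q\<in>P. v q \<bullet> W p = (if q = p then 1 else 0)"
proof -
  have "\<forall>p\<in>P. \<exists>w. \<forall>q\<in>P. v q \<bullet> w = (if q = p then 1 else 0)"
    using dual_vec[of P v] P ind by blast
  then show ?thesis by (rule bchoice)
qed

lemma coeff_conv:
  fixes v :: "'p \<Rightarrow> nat \<Rightarrow> 'a::euclidean_space" and vb :: "'p \<Rightarrow> 'a" and c :: "nat \<Rightarrow> 'p \<Rightarrow> real"
  assumes P: "finite P" and ind: "\<And>c. (\<Sum>p\<in>P. c p *\<^sub>R vb p) = 0 \<Longrightarrow> \<forall>p\<in>P. c p = 0"
    and vconv: "\<And>p. p \<in> P \<Longrightarrow> (\<lambda>l. v p l) \<longlonglongrightarrow> vb p"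
    and yconv: "y \<longlonglongrightarrow> yb"
    and rep: "eventually (\<lambda>l. y l = (\<Sum>p\<in>P. c l p *\<^sub>R v p l)) sequentially"
  shows "\<exists>cb. (\<forall>p\<in>P. (\<lambda>l. c l p) \<longlonglongrightarrow> cb p) \<and> yb = (\<Sum>p\<in>P. cb p *\<^sub>R vb p)"
proof -
  obtain W where W: "\<And>p q. p\<in>P \<Longrightarrow> q\<in>P \<Longrightarrow> vb q \<bullet> W p = (if q = p then 1 else 0)"
    using dual_family[OF P ind] by metis
  have coef: "(\<Sum>q\<in>P. d q *\<^sub>R vb q) \<bullet> W p = d p" if p: "p \<in> P" for d p
  proof -
    have "(\<Sum>q\<in>P. d q *\<^sub>R vb q) \<bullet> W p = (\<Sum>q\<in>P. d q * (vb q \<bullet> W p))"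
      by (simp add: inner_sum_left)
    also have "\<dots> = (\<Sum>q\<in>P. if q = p then d q else 0)"
      by (rule sum.cong) (auto simp: W p)
    also have "\<dots> = d p" using P p by simp
    finally show ?thesis .
  qed
  define WB where "WB = (\<Sum>p\<in>P. norm (W p))"
  have WB0: "WB \<ge> 0" unfolding WB_def by (simp add: sum_nonneg)
  define \<delta> where "\<delta> l = (\<Sum>p\<in>P. norm (v p l - vb p))" for l
  have \<delta>0: "\<delta> \<longlonglongrightarrow> 0" unfolding \<delta>_def
    by (rule tendsto_null_sum, rule tendsto_norm_zero, rule LIM_zero, rule vconv)
  define r where "r l = (\<Sum>q\<in>P. c l q *\<^sub>R (v q l - vb q))" for l
  define M where "M l = (\<Sum>q\<in>P. \<bar>c l q\<bar>)" for l
  have M0: "M l \<ge> 0" for l unfolding M_def by (simp add: sum_nonneg)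
  have rbound: "norm (r l) \<le> M l * \<delta> l" for l
  proof -
    have "norm (r l) \<le> (\<Sum>q\<in>P. norm (c l q *\<^sub>R (v q l - vb q)))" unfolding r_def by (rule norm_sum)
    also have "\<dots> = (\<Sum>q\<in>P. \<bar>c l q\<bar> * norm (v q l - vb q))" by simp
    also have "\<dots> \<le> (\<Sum>q\<in>P. M l * norm (v q l - vb q))"
    proof (rule sum_mono)
      fix q assume q: "q \<in> P"
      have "\<bar>c l q\<bar> \<le> M l" unfolding M_def using P q by (intro member_le_sum) auto
      then show "\<bar>c l q\<bar> * norm (v q l - vb q) \<le> M l * norm (v q l - vb q)"
        by (rule mult_right_mono) simp
    qed
    also have "\<dots> = M l * \<delta> l" unfolding \<delta>_def by (simp add: sum_distrib_left)
    finally show ?thesis .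
  qed
  have ceq: "eventually (\<lambda>l. \<forall>p\<in>P. c l p = (y l - r l) \<bullet> W p) sequentially"
    using rep
  proof eventually_elim
    case (elim l)
    have "y l - r l = (\<Sum>q\<in>P. c l q *\<^sub>R vb q)"
      unfolding elim r_def by (simp add: sum_subtractf[symmetric] scaleR_diff_right)
    then show ?case using coef by simp
  qed
  have Mb: "eventually (\<lambda>l. M l \<le> (norm (y l) + norm (r l)) * WB) sequentially"
    using ceq
  proof eventually_elim
    case (elim l)
    have "M l = (\<Sum>p\<in>P. \<bar>(y l - r l) \<bullet> W p\<bar>)" unfolding M_def
      by (rule sum.cong) (use elim in auto)
    also have "\<dots> \<le> (\<Sum>p\<in>P. norm (y l - r l) * norm (W p))"
      by (rule sum_mono) (rule Cauchy_Schwarz_ineq2)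
    also have "\<dots> = norm (y l - r l) * WB" unfolding WB_def by (simp add: sum_distrib_left)
    also have "\<dots> \<le> (norm (y l) + norm (r l)) * WB"
      by (rule mult_right_mono[OF norm_triangle_ineq4 WB0])
    finally show ?case .
  qed
  obtain B where B: "\<And>l. norm (y l) \<le> B" "B > 0"
    using convergent_imp_Bseq[of y] yconv unfolding convergent_def by (metis BseqE)
  have "eventually (\<lambda>l. \<delta> l < 1 / (2 * (WB + 1))) sequentially"
    using \<delta>0 by (rule order_tendstoD) (use WB0 in simp)
  then have rb: "eventually (\<lambda>l. norm (r l) \<le> (2 * B * WB) * \<delta> l) sequentially"
    using Mb
  proof eventually_elim
    case (elim l)
    have d0: "\<delta> l \<ge> 0" unfolding \<delta>_def by (simp add: sum_nonneg)
    have dW: "\<delta> l * WB \<le> 1/2"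
    proof -
      have "\<delta> l * WB \<le> \<delta> l * (WB + 1)" using d0 by (simp add: mult_left_mono)
      also have "\<dots> \<le> 1/2" using elim(1) WB0 by (simp add: field_simps)
      finally show ?thesis .
    qed
    have "M l \<le> (B + M l * \<delta> l) * WB"
      using elim(2) rbound[of l] B(1)[of l] WB0
      by (meson add_mono mult_right_mono order_trans)
    also have "\<dots> = B * WB + M l * (\<delta> l * WB)" by (simp add: algebra_simps)
    also have "\<dots> \<le> B * WB + M l * (1/2)" using mult_left_mono[OF dW M0[of l]] by simp
    finally have "M l \<le> 2 * B * WB" by simp
    then show ?case using rbound[of l] d0 by (meson mult_right_mono order_trans)
  qed
  have r0: "r \<longlonglongrightarrow> 0"
    by (rule Lim_null_comparison[OF rb]) (rule tendsto_mult_right_zero[OF \<delta>0])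
  define cb where "cb p = yb \<bullet> W p" for p
  have cconv: "(\<lambda>l. c l p) \<longlonglongrightarrow> cb p" if p: "p \<in> P" for p
  proof -
    have "(\<lambda>l. (y l - r l) \<bullet> W p) \<longlonglongrightarrow> (yb - 0) \<bullet> W p"
      by (intro tendsto_intros yconv r0)
    then have "(\<lambda>l. (y l - r l) \<bullet> W p) \<longlonglongrightarrow> cb p" by (simp add: cb_def)
    then show ?thesis
      by (rule Lim_transform_eventually) (use ceq p in \<open>auto elim: eventually_mono\<close>)
  qed
  have "(\<lambda>l. \<Sum>p\<in>P. c l p *\<^sub>R v p l) \<longlonglongrightarrow> (\<Sum>p\<in>P. cb p *\<^sub>R vb p)"
    by (intro tendsto_sum tendsto_scaleR cconv vconv)
  then have "y \<longlonglongrightarrow> (\<Sum>p\<in>P. cb p *\<^sub>R vb p)"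
    by (rule Lim_transform_eventually) (use rep in \<open>auto elim: eventually_mono\<close>)
  then have "yb = (\<Sum>p\<in>P. cb p *\<^sub>R vb p)" using yconv LIMSEQ_unique by blast
  then show ?thesis using cconv by blast
qed

lemma grad_prod:
  fixes \<phi> \<psi> :: "'a::euclidean_space \<Rightarrow> real"
  assumes d1: "\<phi> differentiable at x" and d2: "\<psi> differentiable at x"
  shows "grad (\<lambda>y. \<phi> y * \<psi> y + a) x = \<psi> x *\<^sub>R grad \<phi> x + \<phi> x *\<^sub>R grad \<psi> x"
    and "grad (\<lambda>y. a - \<phi> y * \<psi> y) x = - (\<psi> x *\<^sub>R grad \<phi> x + \<phi> x *\<^sub>R grad \<psi> x)"
proof -
  let ?D1 = "frechet_derivative \<phi> (at x)" and ?D2 = "frechet_derivative \<psi> (at x)"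
  have h1: "(\<phi> has_derivative ?D1) (at x)" using d1 frechet_derivative_works by blast
  have h2: "(\<psi> has_derivative ?D2) (at x)" using d2 frechet_derivative_works by blast
  have hp: "((\<lambda>y. \<phi> y * \<psi> y) has_derivative (\<lambda>h. \<phi> x * ?D2 h + ?D1 h * \<psi> x)) (at x)"
    using has_derivative_mult[OF h1 h2] .
  have "((\<lambda>y. \<phi> y * \<psi> y + a) has_derivative (\<lambda>h. \<phi> x * ?D2 h + ?D1 h * \<psi> x)) (at x)"
    using has_derivative_add[OF hp has_derivative_const[of a]] by simp
  then have e1: "frechet_derivative (\<lambda>y. \<phi> y * \<psi> y + a) (at x) = (\<lambda>h. \<phi> x * ?D2 h + ?D1 h * \<psi> x)"
    using frechet_derivative_at by metis
  have "((\<lambda>y. a - \<phi> y * \<psi> y) has_derivative (\<lambda>h. - (\<phi> x * ?D2 h + ?D1 h * \<psi> x))) (at x)"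
    using has_derivative_diff[OF has_derivative_const[of a] hp] by simp
  then have e2: "frechet_derivative (\<lambda>y. a - \<phi> y * \<psi> y) (at x) = (\<lambda>h. - (\<phi> x * ?D2 h + ?D1 h * \<psi> x))"
    using frechet_derivative_at by metis
  have G: "(\<Sum>i\<in>Basis. (\<phi> x * ?D2 i + ?D1 i * \<psi> x) *\<^sub>R i) = \<psi> x *\<^sub>R grad \<phi> x + \<phi> x *\<^sub>R grad \<psi> x"
    unfolding grad_def
    by (simp add: scaleR_add_left sum.distrib scaleR_sum_right algebra_simps)
  show "grad (\<lambda>y. \<phi> y * \<psi> y + a) x = \<psi> x *\<^sub>R grad \<phi> x + \<phi> x *\<^sub>R grad \<psi> x"
    unfolding grad_def[of "\<lambda>y. \<phi> y * \<psi> y + a"] e1 using G by simp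
  have "grad (\<lambda>y. a - \<phi> y * \<psi> y) x = (\<Sum>i\<in>Basis. - ((\<phi> x * ?D2 i + ?D1 i * \<psi> x) *\<^sub>R i))"
    unfolding grad_def[of "\<lambda>y. a - \<phi> y * \<psi> y"] e2 by (simp only: scaleR_minus_left)
  also have "\<dots> = - (\<Sum>i\<in>Basis. (\<phi> x * ?D2 i + ?D1 i * \<psi> x) *\<^sub>R i)" by (rule sum_negf)
  finally show "grad (\<lambda>y. a - \<phi> y * \<psi> y) x = - (\<psi> x *\<^sub>R grad \<phi> x + \<phi> x *\<^sub>R grad \<psi> x)"
    using G by simp
qed

lemma C2_facts:
  assumes "C2 \<phi>"
  shows "\<phi> differentiable at y" "isCont \<phi> y" "isCont (grad \<phi>) y"
  using assms unfolding C2_def by (auto intro: differentiable_imp_continuous_within)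

lemma sign_lemma:
  fixes a b n u w t :: real
  assumes "t > 0" "w \<ge> 0" "a \<ge> 0" "a * (u * w + t) = 0" "b \<ge> 0" "b * (t - u * w) = 0"
    "n * w = 0" "(a - b) * w \<noteq> 0"
  shows "(a - b) * u + n \<le> 0"
proof -
  have w: "w > 0" "n = 0" using assms by auto
  show ?thesis
  proof (cases "a = 0")
    case True
    then have "b \<noteq> 0" using assms by auto
    then have "u * w = t" using assms by simp
    then have "u > 0" using w assms(1) by (metis zero_less_mult_pos2)
    then show ?thesis using True w assms(5) by simp
  next
    case False
    then have "u * w + t = 0" using assms(4) by simp
    then have "u * w = - t" by linarith
    then have "u < 0" using w assms(1) by (smt (verit) mult_nonneg_nonneg)
    moreover have "b = 0" using assms \<open>u * w = - t\<close> by simp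
    ultimately show ?thesis using False w assms(3) by (simp add: mult_nonneg_nonpos)
  qed
qed

lemma sum_tag4:
  fixes u :: "nat \<times> 'b \<Rightarrow> 'c::comm_monoid_add"
  assumes "finite X0" "finite X1" "finite X2" "finite X3"
  shows "(\<Sum>p\<in>({0::nat}\<times>X0) \<union> ({1}\<times>X1) \<union> ({2}\<times>X2) \<union> ({3}\<times>X3). u p)
     = (\<Sum>x\<in>X0. u (0,x)) + (\<Sum>x\<in>X1. u (1,x)) + (\<Sum>x\<in>X2. u (2,x)) + (\<Sum>x\<in>X3. u (3,x))"
proof -
  have s: "(\<Sum>p\<in>{a}\<times>X. u p) = (\<Sum>x\<in>X. u (a,x))" for a :: nat and X :: "'b set"
  proof -
    have "{a}\<times>X = Pair a ` X" by auto
    moreover have "inj_on (Pair a) X" by (auto simp: inj_on_def)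
    ultimately show ?thesis by (simp add: sum.reindex)
  qed
  show ?thesis using assms
    by (subst sum.union_disjoint, force, force, force)+ (simp add: s)
qed

theorem mainTheorem10:
  fixes f :: "real^'n \<Rightarrow> real"
    and h g F1 F2 :: "nat \<Rightarrow> real^'n \<Rightarrow> real"
    and I J :: "nat set" and k :: nat
    and t :: "nat \<Rightarrow> real" and x :: "nat \<Rightarrow> real^'n" and xbar :: "real^'n"
  assumes "finite I" and "finite J"
    and "C2 f" and "\<forall>i\<in>I. C2 (h i)" and "\<forall>j\<in>J. C2 (g j)"
    and "\<forall>m<k. C2 (F1 m) \<and> C2 (F2 m)"
    and "\<forall>l. t l > 0" and "t \<longlonglongrightarrow> 0"
    and "\<forall>l. KKT_reg f h I g J F1 F2 k (t l) (x l)"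
    and "x \<longlonglongrightarrow> xbar"
    and "xbar \<in> MPOC_feasible h I g J F1 F2 k"
    and "LICQ h I g J F1 F2 k xbar"
  shows "T_stationary f h I g J F1 F2 k xbar"
proof -
  note finI = assms(1) and finJ = assms(2) and C2f = assms(3) and C2h = assms(4) and C2g = assms(5)
    and C2F = assms(6) and tpos = assms(7) and KKT = assms(9) and xconv = assms(10)
    and xbM = assms(11) and licq = assms(12)
  define A01 where "A01 = a01 F1 F2 k xbar"
  define A10 where "A10 = a10 F1 F2 k xbar"
  define A00 where "A00 = a00 F1 F2 k xbar"
  define J0s where "J0s = J0 g J xbar"
  have finA: "finite A01" "finite A10" "finite A00"
    by (auto simp: A01_def A10_def A00_def a01_def a10_def a00_def)
  have finJ0: "finite J0s" "J0s \<subseteq> J" using finJ by (auto simp: J0s_def J0_def)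
  have xbF: "\<And>m. m < k \<Longrightarrow> F1 m xbar * F2 m xbar = 0 \<and> F2 m xbar \<ge> 0"
    and xbg: "\<And>j. j \<in> J \<Longrightarrow> g j xbar \<ge> 0"
    using xbM by (auto simp: MPOC_feasible_def)
  have xbF2: "\<And>m. m < k \<Longrightarrow> F2 m xbar \<noteq> 0 \<Longrightarrow> F2 m xbar > 0"
    using xbF by (metis less_le)
  have part: "{..<k} = A01 \<union> A10 \<union> A00"
  proof (rule set_eqI)
    fix m show "m \<in> {..<k} \<longleftrightarrow> m \<in> A01 \<union> A10 \<union> A00"
    proof (cases "m < k")
      case True
      then show ?thesis using xbF[OF True] xbF2[OF True]
        unfolding A01_def A10_def A00_def a01_def a10_def a00_def by auto
    qed (auto simp: A01_def A10_def A00_def a01_def a10_def a00_def)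
  qed
  have disj: "A01 \<inter> A10 = {}" "A01 \<inter> A00 = {}" "A10 \<inter> A00 = {}" "(A01 \<union> A10) \<inter> A00 = {}"
    by (auto simp: A01_def A10_def A00_def a01_def a10_def a00_def)
  have Ak: "A01 \<subseteq> {..<k}" "A10 \<subseteq> {..<k}" "A00 \<subseteq> {..<k}" using part by auto

  define Q where "Q l lam mu al be nu \<longleftrightarrow> (
        grad f (x l) = (\<Sum>i\<in>I. lam i *\<^sub>R grad (h i) (x l)) + (\<Sum>j\<in>J. mu j *\<^sub>R grad (g j) (x l))
          + (\<Sum>m<k. al m *\<^sub>R grad (\<lambda>y. F1 m y * F2 m y + t l) (x l))
          + (\<Sum>m<k. be m *\<^sub>R grad (\<lambda>y. t l - F1 m y * F2 m y) (x l))
          + (\<Sum>m<k. nu m *\<^sub>R grad (F2 m) (x l))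
        \<and> (\<forall>j\<in>J. mu j \<ge> 0 \<and> mu j * g j (x l) = 0)
        \<and> (\<forall>m<k. al m \<ge> 0 \<and> al m * (F1 m (x l) * F2 m (x l) + t l) = 0)
        \<and> (\<forall>m<k. be m \<ge> 0 \<and> be m * (t l - F1 m (x l) * F2 m (x l)) = 0)
        \<and> (\<forall>m<k. nu m \<ge> 0 \<and> nu m * F2 m (x l) = 0))" for l lam mu al be nu
  have Kf: "\<And>l. x l \<in> MPOC_reg_feasible h I g J F1 F2 k (t l)"
    using KKT unfolding KKT_reg_def by blast
  have ex: "\<forall>l. \<exists>lam mu al be nu. Q l lam mu al be nu"
  proof
    fix l
    from KKT have "KKT_reg f h I g J F1 F2 k (t l) (x l)" ..
    then show "\<exists>lam mu al be nu. Q l lam mu al be nu"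
      unfolding KKT_reg_def Q_def by (elim conjE) assumption
  qed
  obtain LAM where "\<forall>l. \<exists>mu al be nu. Q l (LAM l) mu al be nu"
    using choice[OF ex] by (elim exE)
  from choice[OF this] obtain MU where "\<forall>l. \<exists>al be nu. Q l (LAM l) (MU l) al be nu"
    by (elim exE)
  from choice[OF this] obtain AL where "\<forall>l. \<exists>be nu. Q l (LAM l) (MU l) (AL l) be nu"
    by (elim exE)
  from choice[OF this] obtain BE where "\<forall>l. \<exists>nu. Q l (LAM l) (MU l) (AL l) (BE l) nu"
    by (elim exE)
  from choice[OF this] obtain NU where KQ: "\<forall>l. Q l (LAM l) (MU l) (AL l) (BE l) (NU l)"
    by (elim exE)
  have KG: "\<And>l. grad f (x l) = (\<Sum>i\<in>I. LAM l i *\<^sub>R grad (h i) (x l)) + (\<Sum>j\<in>J. MU l j *\<^sub>R grad (g j) (x l))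
          + (\<Sum>m<k. AL l m *\<^sub>R grad (\<lambda>y. F1 m y * F2 m y + t l) (x l))
          + (\<Sum>m<k. BE l m *\<^sub>R grad (\<lambda>y. t l - F1 m y * F2 m y) (x l))
          + (\<Sum>m<k. NU l m *\<^sub>R grad (F2 m) (x l))"
    and MUprop: "\<And>l j. j \<in> J \<Longrightarrow> MU l j \<ge> 0 \<and> MU l j * g j (x l) = 0"
    and KAL: "\<And>l m. m < k \<Longrightarrow> AL l m \<ge> 0 \<and> AL l m * (F1 m (x l) * F2 m (x l) + t l) = 0"
    and KBE: "\<And>l m. m < k \<Longrightarrow> BE l m \<ge> 0 \<and> BE l m * (t l - F1 m (x l) * F2 m (x l)) = 0"
    and KNU: "\<And>l m. m < k \<Longrightarrow> NU l m \<ge> 0 \<and> NU l m * F2 m (x l) = 0"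
    using KQ unfolding Q_def by auto
  have feas: "\<And>l m. m < k \<Longrightarrow> F2 m (x l) \<ge> 0"
    using Kf by (auto simp: MPOC_reg_feasible_def)
  define Aa where "Aa l m = (AL l m - BE l m) * F2 m (x l)" for l m
  define Bb where "Bb l m = (AL l m - BE l m) * F1 m (x l) + NU l m" for l m
  have S1: "Bb l m \<le> 0" if "m < k" "Aa l m \<noteq> 0" for l m
    unfolding Bb_def
    by (rule sign_lemma[where t="t l" and w="F2 m (x l)" and u="F1 m (x l)"])
       (use tpos feas[OF that(1), of l] KAL[OF that(1), of l] KBE[OF that(1), of l] KNU[OF that(1), of l] that(2) in \<open>auto simp: Aa_def\<close>)
  have S2: "Bb l m = Aa l m * (F1 m (x l) / F2 m (x l))" if "m < k" "F2 m (x l) > 0" for l m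
  proof -
    have "NU l m = 0" using KNU[OF that(1), of l] that(2) by simp
    then show ?thesis using that(2) unfolding Aa_def Bb_def by (simp add: field_simps)
  qed
  have S3: "Aa l m = Bb l m * (F2 m (x l) / F1 m (x l))" if "m < k" "F1 m (x l) \<noteq> 0" for l m
  proof (cases "NU l m = 0")
    case True
    then show ?thesis using that(2) unfolding Aa_def Bb_def by (simp add: field_simps)
  next
    case False
    then have "F2 m (x l) = 0" using KNU[OF that(1), of l] by simp
    then show ?thesis unfolding Aa_def by simp
  qed
  have GF: "grad f (x l) = (\<Sum>i\<in>I. LAM l i *\<^sub>R grad (h i) (x l)) + (\<Sum>j\<in>J. MU l j *\<^sub>R grad (g j) (x l))
     + (\<Sum>m<k. Aa l m *\<^sub>R grad (F1 m) (x l) + Bb l m *\<^sub>R grad (F2 m) (x l))" for l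
  proof -
    have "(\<Sum>m<k. AL l m *\<^sub>R grad (\<lambda>y. F1 m y * F2 m y + t l) (x l))
          + (\<Sum>m<k. BE l m *\<^sub>R grad (\<lambda>y. t l - F1 m y * F2 m y) (x l))
          + (\<Sum>m<k. NU l m *\<^sub>R grad (F2 m) (x l))
        = (\<Sum>m<k. AL l m *\<^sub>R grad (\<lambda>y. F1 m y * F2 m y + t l) (x l)
          + BE l m *\<^sub>R grad (\<lambda>y. t l - F1 m y * F2 m y) (x l) + NU l m *\<^sub>R grad (F2 m) (x l))"
      by (simp add: sum.distrib)
    also have "\<dots> = (\<Sum>m<k. Aa l m *\<^sub>R grad (F1 m) (x l) + Bb l m *\<^sub>R grad (F2 m) (x l))"
    proof (rule sum.cong[OF refl])
      fix m assume "m \<in> {..<k}"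
      then have d: "F1 m differentiable at (x l)" "F2 m differentiable at (x l)"
        using C2F C2_facts by auto
      show "AL l m *\<^sub>R grad (\<lambda>y. F1 m y * F2 m y + t l) (x l)
          + BE l m *\<^sub>R grad (\<lambda>y. t l - F1 m y * F2 m y) (x l) + NU l m *\<^sub>R grad (F2 m) (x l)
          = Aa l m *\<^sub>R grad (F1 m) (x l) + Bb l m *\<^sub>R grad (F2 m) (x l)"
        unfolding grad_prod[OF d] Aa_def Bb_def
        by (simp add: algebra_simps)
    qed
    finally have eq: "(\<Sum>m<k. AL l m *\<^sub>R grad (\<lambda>y. F1 m y * F2 m y + t l) (x l))
          + (\<Sum>m<k. BE l m *\<^sub>R grad (\<lambda>y. t l - F1 m y * F2 m y) (x l))
          + (\<Sum>m<k. NU l m *\<^sub>R grad (F2 m) (x l))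
        = (\<Sum>m<k. Aa l m *\<^sub>R grad (F1 m) (x l) + Bb l m *\<^sub>R grad (F2 m) (x l))" .
    note KG[of l]
    then show ?thesis using eq by (simp add: add.assoc)
  qed
  have cont: "\<And>\<phi>. C2 \<phi> \<Longrightarrow> (\<lambda>l. \<phi> (x l)) \<longlonglongrightarrow> \<phi> xbar"
    using C2_facts(2) isCont_tendsto_compose xconv by blast
  have contg: "\<And>\<phi>. C2 \<phi> \<Longrightarrow> (\<lambda>l. grad \<phi> (x l)) \<longlonglongrightarrow> grad \<phi> xbar"
    using C2_facts(3) isCont_tendsto_compose xconv by blast
  have EJ: "eventually (\<lambda>l. \<forall>j\<in>J - J0s. MU l j = 0) sequentially"
  proof (rule eventually_ball_finite)
    show "finite (J - J0s)" using finJ by simp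
    show "\<forall>j\<in>J - J0s. eventually (\<lambda>l. MU l j = 0) sequentially"
    proof
      fix j assume j: "j \<in> J - J0s"
      then have "g j xbar > 0" using xbg by (auto simp: J0s_def J0_def less_le)
      then have "eventually (\<lambda>l. g j (x l) > 0) sequentially"
        using cont[of "g j"] C2g j by (auto intro: order_tendstoD)
      then show "eventually (\<lambda>l. MU l j = 0) sequentially"
        by eventually_elim (metis MUprop j DiffD1 less_irrefl mult_eq_0_iff)
    qed
  qed
  have E2: "eventually (\<lambda>l. \<forall>m\<in>A01. F2 m (x l) > 0) sequentially"
  proof (rule eventually_ball_finite[OF finA(1)], rule ballI)
    fix m assume m: "m \<in> A01"
    then have "m < k" "F2 m xbar > 0" by (auto simp: A01_def a01_def)
    then show "eventually (\<lambda>l. F2 m (x l) > 0) sequentially"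
      using cont[of "F2 m"] C2F by (auto intro: order_tendstoD)
  qed
  have E3: "eventually (\<lambda>l. \<forall>m\<in>A10. F1 m (x l) \<noteq> 0) sequentially"
  proof (rule eventually_ball_finite[OF finA(2)], rule ballI)
    fix m assume m: "m \<in> A10"
    then have "m < k" "F1 m xbar \<noteq> 0" by (auto simp: A10_def a10_def)
    then show "eventually (\<lambda>l. F1 m (x l) \<noteq> 0) sequentially"
      using cont[of "F1 m"] C2F by (auto intro: tendsto_imp_eventually_ne)
  qed

  define P where "P = ({0::nat}\<times>I) \<union> ({1}\<times>J0s) \<union> ({2}\<times>(A01\<union>A00)) \<union> ({3}\<times>(A10\<union>A00))"
  define vb where "vb p = (if fst p = 0 then grad (h (snd p)) xbar else if fst p = 1 then grad (g (snd p)) xbar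
     else if fst p = 2 then grad (F1 (snd p)) xbar else grad (F2 (snd p)) xbar)" for p :: "nat \<times> nat"
  define v where "v p l = (if fst p = 0 then grad (h (snd p)) (x l) else if fst p = 1 then grad (g (snd p)) (x l)
       else if fst p = 2 then (if snd p \<in> A01 then grad (F1 (snd p)) (x l) + (F1 (snd p) (x l) / F2 (snd p) (x l)) *\<^sub>R grad (F2 (snd p)) (x l) else grad (F1 (snd p)) (x l))
       else (if snd p \<in> A10 then grad (F2 (snd p)) (x l) + (F2 (snd p) (x l) / F1 (snd p) (x l)) *\<^sub>R grad (F1 (snd p)) (x l) else grad (F2 (snd p)) (x l)))"
    for p :: "nat \<times> nat" and l
  define c where "c l p = (if fst p = 0 then LAM l (snd p) else if fst p = 1 then MU l (snd p)
       else if fst p = 2 then Aa l (snd p) else Bb l (snd p))" for l and p :: "nat \<times> nat"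
  have finU: "finite (A01 \<union> A00)" "finite (A10 \<union> A00)" using finA by auto
  have finP: "finite P" unfolding P_def using finI finJ0 finA by auto
  note split = sum_tag4[OF finI finJ0(1) finU]
  have ind: "\<forall>p\<in>P. d p = 0" if d0: "(\<Sum>p\<in>P. d p *\<^sub>R vb p) = 0" for d
  proof -
    have "(\<Sum>i\<in>I. d (0,i) *\<^sub>R grad (h i) xbar) + (\<Sum>j\<in>J0s. d (1,j) *\<^sub>R grad (g j) xbar)
        + (\<Sum>m\<in>A01 \<union> A00. d (2,m) *\<^sub>R grad (F1 m) xbar) + (\<Sum>m\<in>A10 \<union> A00. d (3,m) *\<^sub>R grad (F2 m) xbar) = 0"
      using d0 unfolding P_def split by (simp add: vb_def)
    then have "(\<forall>i\<in>I. d (0,i) = 0) \<and> (\<forall>j\<in>J0s. d (1,j) = 0) \<and> (\<forall>m\<in>A01 \<union> A00. d (2,m) = 0)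
        \<and> (\<forall>m\<in>A10 \<union> A00. d (3,m) = 0)"
      using licq[unfolded LICQ_def, folded A01_def A10_def A00_def J0s_def, rule_format,
          of "\<lambda>i. d (0,i)" "\<lambda>j. d (1,j)" "\<lambda>m. d (2,m)" "\<lambda>m. d (3,m)"] by blast
    then show ?thesis unfolding P_def by auto
  qed
  have vconv: "(\<lambda>l. v p l) \<longlonglongrightarrow> vb p" if "p \<in> P" for p
  proof -
    obtain a i where p: "p = (a,i)" by (cases p)
    from that consider "a = 0" "i \<in> I" | "a = 1" "i \<in> J0s" | "a = 2" "i \<in> A01" | "a = 2" "i \<in> A00"
        | "a = 3" "i \<in> A10" | "a = 3" "i \<in> A00" unfolding P_def p by auto
    then show ?thesis
    proof cases
      case 1 then show ?thesis unfolding p v_def vb_def using contg C2h by simp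
    next
      case 2 then show ?thesis unfolding p v_def vb_def using contg C2g finJ0(2) by auto
    next
      case 3
      then have i: "i < k" "F1 i xbar = 0" "F2 i xbar > 0" by (auto simp: A01_def a01_def)
      have "(\<lambda>l. grad (F1 i) (x l) + (F1 i (x l) / F2 i (x l)) *\<^sub>R grad (F2 i) (x l))
           \<longlonglongrightarrow> grad (F1 i) xbar + (F1 i xbar / F2 i xbar) *\<^sub>R grad (F2 i) xbar"
        using i C2F by (intro tendsto_intros contg cont) auto
      then show ?thesis unfolding p v_def vb_def using 3 i by simp
    next
      case 4
      then have "i \<notin> A01" "i < k" using disj Ak by auto
      then show ?thesis unfolding p v_def vb_def using 4 contg C2F by simp
    next
      case 5
      then have i: "i < k" "F2 i xbar = 0" "F1 i xbar \<noteq> 0" by (auto simp: A10_def a10_def)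
      have "(\<lambda>l. grad (F2 i) (x l) + (F2 i (x l) / F1 i (x l)) *\<^sub>R grad (F1 i) (x l))
           \<longlonglongrightarrow> grad (F2 i) xbar + (F2 i xbar / F1 i xbar) *\<^sub>R grad (F1 i) xbar"
        using i C2F by (intro tendsto_intros contg cont) auto
      then show ?thesis unfolding p v_def vb_def using 5 i by simp
    next
      case 6
      then have "i \<notin> A10" "i < k" using disj Ak by auto
      then show ?thesis unfolding p v_def vb_def using 6 contg C2F by simp
    qed
  qed

  have rep: "eventually (\<lambda>l. grad f (x l) = (\<Sum>p\<in>P. c l p *\<^sub>R v p l)) sequentially"
    using EJ E2 E3
  proof eventually_elim
    case (elim l)
    have sJ: "(\<Sum>j\<in>J. MU l j *\<^sub>R grad (g j) (x l)) = (\<Sum>j\<in>J0s. MU l j *\<^sub>R grad (g j) (x l))"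
      by (rule sum.mono_neutral_right[OF finJ finJ0(2)]) (use elim(1) in auto)
    define T where "T m = Aa l m *\<^sub>R grad (F1 m) (x l) + Bb l m *\<^sub>R grad (F2 m) (x l)" for m
    have sk: "(\<Sum>m<k. T m) = (\<Sum>m\<in>A01. T m) + (\<Sum>m\<in>A10. T m) + (\<Sum>m\<in>A00. T m)"
      unfolding part using finA disj by (simp add: sum.union_disjoint)
    have s01: "(\<Sum>m\<in>A01. T m) = (\<Sum>m\<in>A01. c l (2,m) *\<^sub>R v (2,m) l)"
    proof (rule sum.cong[OF refl])
      fix m assume m: "m \<in> A01"
      then have "m < k" "F2 m (x l) > 0" using elim(2) Ak by auto
      then have "Bb l m = Aa l m * (F1 m (x l) / F2 m (x l))" by (rule S2)
      then show "T m = c l (2,m) *\<^sub>R v (2,m) l" using m by (simp add: T_def c_def v_def scaleR_add_right)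
    qed
    have s10: "(\<Sum>m\<in>A10. T m) = (\<Sum>m\<in>A10. c l (3,m) *\<^sub>R v (3,m) l)"
    proof (rule sum.cong[OF refl])
      fix m assume m: "m \<in> A10"
      then have "m < k" "F1 m (x l) \<noteq> 0" using elim(3) Ak by auto
      then have "Aa l m = Bb l m * (F2 m (x l) / F1 m (x l))" by (rule S3)
      then show "T m = c l (3,m) *\<^sub>R v (3,m) l" using m by (simp add: T_def c_def v_def scaleR_add_right)
    qed
    have s00: "(\<Sum>m\<in>A00. T m) = (\<Sum>m\<in>A00. c l (2,m) *\<^sub>R v (2,m) l) + (\<Sum>m\<in>A00. c l (3,m) *\<^sub>R v (3,m) l)"
      unfolding sum.distrib[symmetric]
    proof (rule sum.cong[OF refl])
      fix m assume m: "m \<in> A00"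
      then have "m \<notin> A01" "m \<notin> A10" using disj by auto
      then show "T m = c l (2,m) *\<^sub>R v (2,m) l + c l (3,m) *\<^sub>R v (3,m) l" by (simp add: T_def c_def v_def)
    qed
    have u2: "(\<Sum>m\<in>A01 \<union> A00. c l (2,m) *\<^sub>R v (2,m) l) = (\<Sum>m\<in>A01. c l (2,m) *\<^sub>R v (2,m) l) + (\<Sum>m\<in>A00. c l (2,m) *\<^sub>R v (2,m) l)"
      using finA disj by (simp add: sum.union_disjoint)
    have u3: "(\<Sum>m\<in>A10 \<union> A00. c l (3,m) *\<^sub>R v (3,m) l) = (\<Sum>m\<in>A10. c l (3,m) *\<^sub>R v (3,m) l) + (\<Sum>m\<in>A00. c l (3,m) *\<^sub>R v (3,m) l)"
      using finA disj by (simp add: sum.union_disjoint)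
    have t0: "(\<Sum>i\<in>I. c l (0,i) *\<^sub>R v (0,i) l) = (\<Sum>i\<in>I. LAM l i *\<^sub>R grad (h i) (x l))"
      by (simp add: c_def v_def)
    have t1: "(\<Sum>j\<in>J0s. c l (1,j) *\<^sub>R v (1,j) l) = (\<Sum>j\<in>J0s. MU l j *\<^sub>R grad (g j) (x l))"
      by (simp add: c_def v_def)
    have "(\<Sum>p\<in>P. c l p *\<^sub>R v p l) = (\<Sum>i\<in>I. LAM l i *\<^sub>R grad (h i) (x l)) + (\<Sum>j\<in>J0s. MU l j *\<^sub>R grad (g j) (x l))
       + ((\<Sum>m\<in>A01. c l (2,m) *\<^sub>R v (2,m) l) + (\<Sum>m\<in>A00. c l (2,m) *\<^sub>R v (2,m) l))
       + ((\<Sum>m\<in>A10. c l (3,m) *\<^sub>R v (3,m) l) + (\<Sum>m\<in>A00. c l (3,m) *\<^sub>R v (3,m) l))"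
      unfolding P_def split u2 u3 t0 t1 ..
    moreover have "grad f (x l) = (\<Sum>i\<in>I. LAM l i *\<^sub>R grad (h i) (x l)) + (\<Sum>j\<in>J0s. MU l j *\<^sub>R grad (g j) (x l))
       + ((\<Sum>m\<in>A01. c l (2,m) *\<^sub>R v (2,m) l) + (\<Sum>m\<in>A10. c l (3,m) *\<^sub>R v (3,m) l)
       + ((\<Sum>m\<in>A00. c l (2,m) *\<^sub>R v (2,m) l) + (\<Sum>m\<in>A00. c l (3,m) *\<^sub>R v (3,m) l)))"
      using GF[of l] unfolding sJ T_def[symmetric] sk s01 s10 s00 .
    ultimately show ?case by (simp add: ac_simps)
  qed
  obtain cb where cbconv: "\<forall>p\<in>P. (\<lambda>l. c l p) \<longlonglongrightarrow> cb p" and cbeq: "grad f xbar = (\<Sum>p\<in>P. cb p *\<^sub>R vb p)"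
    using coeff_conv[OF finP ind vconv contg[OF C2f] rep] by blast
  have eq: "grad f xbar = (\<Sum>i\<in>I. cb (0,i) *\<^sub>R grad (h i) xbar) + (\<Sum>j\<in>J0s. cb (1,j) *\<^sub>R grad (g j) xbar)
      + (\<Sum>m\<in>A01. cb (2,m) *\<^sub>R grad (F1 m) xbar) + (\<Sum>m\<in>A10. cb (3,m) *\<^sub>R grad (F2 m) xbar)
      + (\<Sum>m\<in>A00. cb (2,m) *\<^sub>R grad (F1 m) xbar + cb (3,m) *\<^sub>R grad (F2 m) xbar)"
  proof -
    have "grad f xbar = (\<Sum>i\<in>I. cb (0,i) *\<^sub>R grad (h i) xbar) + (\<Sum>j\<in>J0s. cb (1,j) *\<^sub>R grad (g j) xbar)
      + (\<Sum>m\<in>A01 \<union> A00. cb (2,m) *\<^sub>R grad (F1 m) xbar) + (\<Sum>m\<in>A10 \<union> A00. cb (3,m) *\<^sub>R grad (F2 m) xbar)"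
      using cbeq unfolding P_def split by (simp add: vb_def)
    also have "\<dots> = (\<Sum>i\<in>I. cb (0,i) *\<^sub>R grad (h i) xbar) + (\<Sum>j\<in>J0s. cb (1,j) *\<^sub>R grad (g j) xbar)
      + ((\<Sum>m\<in>A01. cb (2,m) *\<^sub>R grad (F1 m) xbar) + (\<Sum>m\<in>A00. cb (2,m) *\<^sub>R grad (F1 m) xbar))
      + ((\<Sum>m\<in>A10. cb (3,m) *\<^sub>R grad (F2 m) xbar) + (\<Sum>m\<in>A00. cb (3,m) *\<^sub>R grad (F2 m) xbar))"
      using finA disj by (simp add: sum.union_disjoint)
    finally show ?thesis by (simp add: sum.distrib ac_simps)
  qed
  have mu: "\<forall>j\<in>J0s. cb (1,j) \<ge> 0"
  proof
    fix j assume j: "j \<in> J0s"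
    then have p1: "(1,j) \<in> P" unfolding P_def by auto
    have "(\<lambda>l. MU l j) \<longlonglongrightarrow> cb (1,j)" using cbconv[rule_format, OF p1] by (simp add: c_def)
    then show "cb (1,j) \<ge> 0"
      by (rule tendsto_lowerbound) (use MUprop j finJ0(2) in auto)
  qed
  have r: "\<forall>m\<in>A00. cb (2,m) = 0 \<or> cb (3,m) \<le> 0"
  proof (intro ballI)
    fix m assume m: "m \<in> A00"
    show "cb (2,m) = 0 \<or> cb (3,m) \<le> 0"
    proof (cases "cb (2,m) = 0")
      case False
      then have ne: "cb (2,m) \<noteq> 0" .
      have mk: "m < k" using m Ak by auto
      have p2: "(2,m) \<in> P" and p3: "(3,m) \<in> P" using m unfolding P_def by auto
      have l2: "(\<lambda>l. Aa l m) \<longlonglongrightarrow> cb (2,m)" using cbconv[rule_format, OF p2] by (simp add: c_def)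
      have l3: "(\<lambda>l. Bb l m) \<longlonglongrightarrow> cb (3,m)" using cbconv[rule_format, OF p3] by (simp add: c_def)
      have "eventually (\<lambda>l. Aa l m \<noteq> 0) sequentially" using tendsto_imp_eventually_ne[OF l2 ne] .
      then have "eventually (\<lambda>l. Bb l m \<le> 0) sequentially" by eventually_elim (rule S1[OF mk])
      then have "cb (3,m) \<le> 0" by (rule tendsto_upperbound[OF l3]) simp
      then show ?thesis ..
    qed simp
  qed
  show ?thesis
    unfolding T_stationary_def A01_def[symmetric] A10_def[symmetric] A00_def[symmetric] J0s_def[symmetric]
    apply (rule conjI[OF xbM])
    apply (rule exI[where x="\<lambda>i. cb (0,i)"])
    apply (rule exI[where x="\<lambda>j. cb (1,j)"])
    apply (rule exI[where x="\<lambda>m. cb (2,m)"])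
    apply (rule exI[where x="\<lambda>m. cb (3,m)"])
    apply (rule exI[where x="\<lambda>m. cb (2,m)"])
    apply (rule exI[where x="\<lambda>m. cb (3,m)"])
    using eq mu r by blast
qed

end
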